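(* The affine hypersurface $Q\subset\mathbf{A}^4_{\mathbf{C}}$ with coordinates $(t,s,z,w)$ defined by $(w^3-1)(t^2-1)=(z^3-1)(s^2-1)$ is rational. *)

theory Defs
  imports "HOL-Analysis.Analysis"
begin

inductive polyfun :: "('a \<Rightarrow> complex) set \<Rightarrow> ('a \<Rightarrow> complex) \<Rightarrow> bool"
  for C :: "('a \<Rightarrow> complex) set" where
  pf_const: "polyfun C (\<lambda>x. c)"
| pf_var: "f \<in> C \<Longrightarrow> polyfun C f"
| pf_add: "polyfun C f \<Longrightarrow> polyfun C g \<Longrightarrow> polyfun C (\<lambda>x. f x + g x)"
| pf_mult: "polyfun C f \<Longrightarrow> polyfun C g \<Longrightarrow> polyfun C (\<lambda>x. f x * g x)"

definition affpoly :: "(complex^'n \<Rightarrow> complex) \<Rightarrow> bool" where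
  "affpoly p \<longleftrightarrow> polyfun (range (\<lambda>i x. x $ i)) p"

definition zariski_dense_in :: "(complex^'n) set \<Rightarrow> (complex^'n) set \<Rightarrow> bool" where
  "zariski_dense_in V X \<longleftrightarrow> V \<subseteq> X \<and>
     (\<forall>p. affpoly p \<longrightarrow> (\<forall>v\<in>V. p v = 0) \<longrightarrow> (\<forall>x\<in>X. p x = 0))"

text \<open>X \<subseteq> A^n is birational to affine space A^d: there are mutually inverse rational maps
  phi : A^d --> X (components a i / b i) and psi : X --> A^d (components c j / e j),
  with psi o phi = id on the nonempty Zariski open set D(g) of A^d (on which phi lands in X),
  and phi o psi = id on the Zariski-dense open subset X \<inter> D(h) of X.\<close>
definition birational_to_affine :: "(complex^'n) set \<Rightarrow> 'd::finite itself \<Rightarrow> bool" where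
  "birational_to_affine X (_ :: 'd itself) \<longleftrightarrow>
     (\<exists>(a :: 'n \<Rightarrow> complex^'d \<Rightarrow> complex) (b :: 'n \<Rightarrow> complex^'d \<Rightarrow> complex)
        (c :: 'd \<Rightarrow> complex^'n \<Rightarrow> complex) (e :: 'd \<Rightarrow> complex^'n \<Rightarrow> complex)
        (g :: complex^'d \<Rightarrow> complex) (h :: complex^'n \<Rightarrow> complex).
        (\<forall>i. affpoly (a i) \<and> affpoly (b i)) \<and> (\<forall>j. affpoly (c j) \<and> affpoly (e j)) \<and>
        affpoly g \<and> affpoly h \<and>
        (\<exists>u. g u \<noteq> 0) \<and> zariski_dense_in {x\<in>X. h x \<noteq> 0} X \<and>
        (\<forall>u. g u \<noteq> 0 \<longrightarrow>
            (\<forall>i. b i u \<noteq> 0) \<and> (\<chi> i. a i u / b i u) \<in> X \<and>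
            (\<forall>j. e j (\<chi> i. a i u / b i u) \<noteq> 0) \<and>
            (\<chi> j. c j (\<chi> i. a i u / b i u) / e j (\<chi> i. a i u / b i u)) = u) \<and>
        (\<forall>x\<in>X. h x \<noteq> 0 \<longrightarrow>
            (\<forall>j. e j x \<noteq> 0) \<and> (\<forall>i. b i (\<chi> j. c j x / e j x) \<noteq> 0) \<and>
            (\<chi> i. a i (\<chi> j. c j x / e j x) / b i (\<chi> j. c j x / e j x)) = x))"

end

theory Submission
  imports Defs "HOL-Computational_Algebra.Polynomial"
begin

lemma polyfun_cont:
  assumes "polyfun C f" "\<And>g. g \<in> C \<Longrightarrow> continuous_on UNIV g"
  shows "continuous_on UNIV f"
  using assms by (induction rule: polyfun.induct) (auto intro!: continuous_intros)

lemma affpoly_cont: "affpoly (p :: complex^'n \<Rightarrow> complex) \<Longrightarrow> continuous_on UNIV p"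
  unfolding affpoly_def
  by (erule polyfun_cont) (auto intro!: continuous_intros simp: continuous_on_component)

definition mk :: "complex \<Rightarrow> complex \<Rightarrow> complex \<Rightarrow> complex \<Rightarrow> complex^4" where
  "mk t s z w = (\<chi> i. if i = 1 then t else if i = 2 then s else if i = 3 then z else w)"

lemma mk_nth [simp]: "mk t s z w $ 1 = t" "mk t s z w $ 2 = s" "mk t s z w $ 3 = z" "mk t s z w $ 4 = w"
  by (simp_all add: mk_def)

lemma mk_eta: "mk (x$1) (x$2) (x$3) (x$4) = x"
  by (simp add: vec_eq_iff forall_4)

lemma ev_poly: "(q :: complex poly) \<noteq> 0 \<Longrightarrow> eventually (\<lambda>x. poly q x \<noteq> 0) (at a)"
proof -
  assume "q \<noteq> 0"
  then have fin: "finite {x. poly q x = 0}" by (rule poly_roots_finite)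
  have "eventually (\<lambda>x. \<forall>y\<in>{x. poly q x = 0}. x \<noteq> y) (at a)"
    using fin by (rule eventually_ball_finite) (auto intro: eventually_neq_at_within)
  then show ?thesis by eventually_elim auto
qed

lemma ev_cubic:
  fixes c3 c2 c1 c0 :: complex
  assumes "c3 \<noteq> 0"
  shows "eventually (\<lambda>x. c3*x^3 + c2*x^2 + c1*x + c0 \<noteq> 0) (at a)"
proof -
  have "[:c0, c1, c2, c3:] \<noteq> 0" using assms by simp
  then have ev: "eventually (\<lambda>x. poly [:c0, c1, c2, c3:] x \<noteq> 0) (at a)" by (rule ev_poly)
  have eq: "poly [:c0, c1, c2, c3:] x = c3*x^3 + c2*x^2 + c1*x + c0" for x
    by (simp add: power3_eq_cube power2_eq_square algebra_simps)
  show ?thesis using ev unfolding eq .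
qed

lemma ev_quad:
  fixes c2 c1 c0 :: complex
  assumes "c2 \<noteq> 0"
  shows "eventually (\<lambda>x. c2*x^2 + c1*x + c0 \<noteq> 0) (at a)"
proof -
  have "[:c0, c1, c2:] \<noteq> 0" using assms by simp
  then have ev: "eventually (\<lambda>x. poly [:c0, c1, c2:] x \<noteq> 0) (at a)" by (rule ev_poly)
  have eq: "poly [:c0, c1, c2:] x = c2*x^2 + c1*x + c0" for x
    by (simp add: power2_eq_square algebra_simps)
  show ?thesis using ev unfolding eq .
qed

lemma ev_ne0:
  fixes f :: "complex \<Rightarrow> complex"
  shows "isCont f a \<Longrightarrow> f a \<noteq> 0 \<Longrightarrow> eventually (\<lambda>l. f l \<noteq> 0) (at a)"
  unfolding isCont_def by (rule tendsto_imp_eventually_ne)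

lemma close4:
  fixes p :: "complex^4 \<Rightarrow> complex"
  assumes pc: "continuous_on UNIV p"
    and T: "(T \<longlongrightarrow> t0) (at 0)" and S: "(S \<longlongrightarrow> s0) (at 0)"
    and Z: "(Z \<longlongrightarrow> z0) (at 0)" and W: "(W \<longlongrightarrow> w0) (at 0)"
    and ev: "eventually (\<lambda>l. p (mk (T l) (S l) (Z l) (W l)) = 0) (at (0::complex))"
  shows "p (mk t0 s0 z0 w0) = 0"
proof -
  have "((\<lambda>l. mk (T l) (S l) (Z l) (W l)) \<longlongrightarrow> mk t0 s0 z0 w0) (at 0)"
    apply (rule vec_tendstoI)
    subgoal for i using exhaust_4[of i] T S Z W by auto
    done
  moreover have "isCont p (mk t0 s0 z0 w0)" using pc by (simp add: continuous_on_eq_continuous_at)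
  ultimately have "((\<lambda>l. p (mk (T l) (S l) (Z l) (W l))) \<longlongrightarrow> p (mk t0 s0 z0 w0)) (at 0)"
    by (rule isCont_tendsto_compose[rotated])
  moreover have "((\<lambda>l. p (mk (T l) (S l) (Z l) (W l))) \<longlongrightarrow> 0) (at 0)"
    using ev by (rule tendsto_eventually)
  ultimately show ?thesis by (rule tendsto_unique[OF at_neq_bot])
qed

definition rr :: "complex \<Rightarrow> complex \<Rightarrow> complex \<Rightarrow> complex \<Rightarrow> complex \<Rightarrow> complex" where
  "rr a b m al be = 2*(b*be - a*al*m)/(al*m^2 - be)"
definition PhT where "PhT a b m al be = a + m * rr a b m al be"
definition PhS where "PhS a b m al be = b + rr a b m al be"

lemma rr_eq: "al*m^2 \<noteq> be \<Longrightarrow> rr a b m al be * (al*m^2 - be) = 2*(b*be - a*al*m)"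
  unfolding rr_def by simp

lemma ph_Q:
  assumes a: "a^2 = 1" and b: "b^2 = 1" and D: "al*m^2 \<noteq> be"
  shows "al*((PhT a b m al be)^2 - 1) = be*((PhS a b m al be)^2 - 1)"
proof -
  define r where "r = rr a b m al be"
  have e: "r * (al*m^2 - be) = 2*(b*be - a*al*m)" unfolding r_def using rr_eq[OF D] .
  have 1: "(a + m*r)^2 - 1 = 2*a*m*r + m^2*r^2" using a by (simp add: power2_eq_square algebra_simps)
  have 2: "(b + r)^2 - 1 = 2*b*r + r^2" using b by (simp add: power2_eq_square algebra_simps)
  have "al*(2*a*m*r + m^2*r^2) - be*(2*b*r + r^2) = r*(r*(al*m^2 - be) - 2*(b*be - a*al*m))"
    by (simp add: algebra_simps power2_eq_square)
  also have "\<dots> = 0" using e by simp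
  finally show ?thesis unfolding PhT_def PhS_def r_def[symmetric] 1 2 by simp
qed

lemma rr_iff: "al*m^2 \<noteq> be \<Longrightarrow> (rr a b m al be = X) = (X*(al*m^2 - be) = 2*(b*be - a*al*m))"
  unfolding rr_def by (auto simp: field_simps)

lemma ph_hom: "k \<noteq> 0 \<Longrightarrow> rr a b m (k*al) (k*be) = rr a b m al be"
proof -
  assume k: "k \<noteq> 0"
  have 1: "b*(k*be) - a*(k*al)*m = k*(b*be - a*al*m)" "(k*al)*m^2 - k*be = k*(al*m^2-be)"
    by (simp_all add: algebra_simps)
  show ?thesis unfolding rr_def 1 using k by (simp add: mult.left_commute)
qed

context
  fixes p :: "complex^4 \<Rightarrow> complex"
  assumes pc: "continuous_on UNIV p"
    and H: "\<And>t s z w. (w^3-1)*(t^2-1) = (z^3-1)*(s^2-1) \<Longrightarrow> s \<noteq> 1 \<Longrightarrow>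
              (w^3-1)*(t-1)^2 \<noteq> (z^3-1)*(s-1)^2 \<Longrightarrow> p (mk t s z w) = 0"
begin

lemma good_phi:
  assumes "(w^3-1)*m \<noteq> z^3-1" "(w^3-1)*m^2 \<noteq> z^3-1"
  shows "p (mk (PhT 1 1 m (w^3-1) (z^3-1)) (PhS 1 1 m (w^3-1) (z^3-1)) z w) = 0"
proof -
  define A where "A = w^3 - 1"
  define B where "B = z^3 - 1"
  define r where "r = rr 1 1 m A B"
  have D: "A*m^2 \<noteq> B" using assms unfolding A_def B_def by auto
  have e: "r * (A*m^2 - B) = 2*(B - A*m)" unfolding r_def using rr_eq[OF D] by simp
  have r0: "r \<noteq> 0"
  proof
    assume "r = 0"
    with e have "B - A*m = 0" by simp
    with assms show False unfolding A_def B_def by simp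
  qed
  have Q: "A*((PhT 1 1 m A B)^2 - 1) = B*((PhS 1 1 m A B)^2 - 1)" by (rule ph_Q) (use D in auto)
  have "A*(PhT 1 1 m A B - 1)^2 - B*(PhS 1 1 m A B - 1)^2 = r^2 * (A*m^2 - B)"
    unfolding PhT_def PhS_def r_def[symmetric] by (simp add: algebra_simps power2_eq_square)
  also have "\<dots> \<noteq> 0" using r0 D by simp
  finally have 2: "A*(PhT 1 1 m A B - 1)^2 \<noteq> B*(PhS 1 1 m A B - 1)^2" by simp
  have 3: "PhS 1 1 m A B \<noteq> 1" unfolding PhS_def r_def[symmetric] using r0 by simp
  have "p (mk (PhT 1 1 m A B) (PhS 1 1 m A B) z w) = 0"
    by (rule H) (use Q 2 3 in \<open>simp_all add: A_def B_def\<close>)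
  then show ?thesis by (simp add: A_def B_def)
qed

lemma S1:
  assumes Q: "(w^3-1)*(t^2-1) = (z^3-1)*(s^2-1)"
    and A0: "w^3-1 \<noteq> 0" and B0: "z^3-1 \<noteq> 0" and AB: "w^3-1 \<noteq> z^3-1"
  shows "p (mk t s z w) = 0"
proof (cases "s \<noteq> 1 \<and> (w^3-1)*(t-1)^2 \<noteq> (z^3-1)*(s-1)^2")
  case True
  then show ?thesis using H Q by blast
next
  case False
  define A where "A = w^3 - 1"
  define B where "B = z^3 - 1"
  have A: "A \<noteq> 0" and B: "B \<noteq> 0" and AB': "A \<noteq> B" using A0 B0 AB by (auto simp: A_def B_def)
  have Q': "A*(t^2-1) = B*(s^2-1)" using Q by (simp add: A_def B_def)
  have bad: "s = 1 \<or> A*(t-1)^2 = B*(s-1)^2" using False by (auto simp: A_def B_def)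
  have s1: "s = 1"
  proof (rule ccontr)
    assume s1: "s \<noteq> 1"
    then have e2: "A*(t-1)^2 = B*(s-1)^2" using bad by auto
    have e1: "A*(t-1)*(t+1) = B*(s-1)*(s+1)" using Q' by (simp add: algebra_simps power2_eq_square)
    have "B*(s-1)^2*(t+1) = B*(s-1)*(s+1)*(t-1)"
      using e1 e2 by (metis (no_types, lifting) mult.commute mult.left_commute power2_eq_square)
    then have "(s-1)*(t+1) = (s+1)*(t-1)" using B s1 by (simp add: power2_eq_square)
    then have "t = s" by (simp add: algebra_simps)
    then show False using e2 s1 AB' by simp
  qed
  then have "t^2 = 1" using Q' A by simp
  then have t: "t = 1 \<or> t = -1" by (metis power2_eq_1_iff)
  have l0: "eventually (\<lambda>l::complex. l \<noteq> 0) (at 0)" by (rule eventually_neq_at_within)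
  show ?thesis
  proof (cases "t = 1")
    case True
    define m where "m = (\<lambda>l::complex. B/A + l)"
    have D0: "A*(B/A)^2 - B \<noteq> 0" using A B AB' by (auto simp: power2_eq_square field_simps)
    have cT: "isCont (\<lambda>l. PhT 1 1 (m l) A B) 0" unfolding PhT_def rr_def m_def
      by (intro continuous_intros) (use D0 in auto)
    have cS: "isCont (\<lambda>l. PhS 1 1 (m l) A B) 0" unfolding PhS_def rr_def m_def
      by (intro continuous_intros) (use D0 in auto)
    have r0: "rr 1 1 (m 0) A B = 0" unfolding rr_def m_def using A by simp
    have T0: "PhT 1 1 (m 0) A B = 1" "PhS 1 1 (m 0) A B = 1" unfolding PhT_def PhS_def r0 by simp_all
    have cD: "isCont (\<lambda>l. A*(m l)^2 - B) 0" unfolding m_def by (intro continuous_intros)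
    have evD: "eventually (\<lambda>l. A*(m l)^2 - B \<noteq> 0) (at 0)"
      using tendsto_imp_eventually_ne[OF cD[unfolded isCont_def], of 0] D0 unfolding m_def by simp
    have ev: "eventually (\<lambda>l. p (mk (PhT 1 1 (m l) A B) (PhS 1 1 (m l) A B) z w) = 0) (at 0)"
      using evD l0
    proof eventually_elim
      case (elim l)
      have "A * m l \<noteq> B" using elim A unfolding m_def by (simp add: field_simps)
      moreover have "A * (m l)^2 \<noteq> B" using elim by simp
      ultimately show ?case using good_phi[of w "m l" z] unfolding A_def B_def by simp
    qed
    show ?thesis
      using close4[OF pc cT[unfolded isCont_def] cS[unfolded isCont_def] tendsto_const tendsto_const ev]
      using T0 s1 True by simp
  next
    case False
    with t have t1: "t = -1" by simp
    define T' where "T' = (\<lambda>l::complex. 1 + 2*(B*l - A)/(A - B*l^2))"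
    define S' where "S' = (\<lambda>l::complex. 1 + 2*l*(B*l - A)/(A - B*l^2))"
    have cT: "isCont T' 0" unfolding T'_def by (intro continuous_intros) (use A in auto)
    have cS: "isCont S' 0" unfolding S'_def by (intro continuous_intros) (use A in auto)
    have T0: "T' 0 = -1" "S' 0 = 1" unfolding T'_def S'_def using A by simp_all
    have c1: "isCont (\<lambda>l. A - B*l) 0" by (intro continuous_intros)
    have c2: "isCont (\<lambda>l. A - B*l^2) 0" by (intro continuous_intros)
    have e1: "eventually (\<lambda>l. A - B*l \<noteq> 0) (at 0)"
      using ev_ne0[OF c1] A by simp
    have e2: "eventually (\<lambda>l. A - B*l^2 \<noteq> 0) (at 0)"
      using ev_ne0[OF c2] A by simp
    have ev: "eventually (\<lambda>l. p (mk (T' l) (S' l) z w) = 0) (at 0)"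
      using e1 e2 l0
    proof eventually_elim
      case (elim l)
      have D: "A*(1/l)^2 - B = (A - B*l^2)/l^2" using elim by (simp add: field_simps)
      have N: "B - A*(1/l) = l*(B*l - A)/l^2" using elim by (simp add: field_simps power2_eq_square)
      have rr: "rr 1 1 (1/l) A B = 2*l*(B*l - A)/(A - B*l^2)"
        unfolding rr_def D N using elim by simp (simp add: field_simps power2_eq_square)
      have eT: "PhT 1 1 (1/l) A B = T' l" unfolding PhT_def rr T'_def using elim
        by (simp add: field_simps)
      have eS: "PhS 1 1 (1/l) A B = S' l" unfolding PhS_def rr S'_def by simp
      have "A * (1/l) \<noteq> B" using elim by (simp add: field_simps)
      moreover have "A * (1/l)^2 \<noteq> B" using elim by (simp add: field_simps)
      ultimately show ?case using good_phi[of w "1/l" z] eT eS unfolding A_def B_def by simp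
    qed
    show ?thesis
      using close4[OF pc cT[unfolded isCont_def] cS[unfolded isCont_def] tendsto_const tendsto_const ev]
      using T0 s1 t1 by simp
  qed
qed

lemma MOVE0:
  assumes a: "a^2 = 1" and b: "b^2 = 1" and D: "(w0^3-1)*m0^2 \<noteq> z0^3-1"
    and t: "t0 = PhT a b m0 (w0^3-1) (z0^3-1)" and s: "s0 = PhS a b m0 (w0^3-1) (z0^3-1)"
  shows "p (mk t0 s0 z0 w0) = 0"
proof -
  define Af where "Af = (\<lambda>l::complex. (w0 + 2*l)^3 - 1)"
  define Bf where "Bf = (\<lambda>l::complex. (z0 + l)^3 - 1)"
  define T where "T = (\<lambda>l. PhT a b m0 (Af l) (Bf l))"
  define S where "S = (\<lambda>l. PhS a b m0 (Af l) (Bf l))"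
  have cT: "isCont T 0" unfolding T_def PhT_def rr_def Af_def Bf_def
    by (intro continuous_intros) (use D in auto)
  have cS: "isCont S 0" unfolding S_def PhS_def rr_def Af_def Bf_def
    by (intro continuous_intros) (use D in auto)
  have cZ: "((\<lambda>l. z0 + l) \<longlongrightarrow> z0) (at 0)" by (intro tendsto_eq_intros) auto
  have cW: "((\<lambda>l. w0 + 2*l) \<longlongrightarrow> w0) (at 0)" by (intro tendsto_eq_intros) auto
  have T0: "T 0 = t0" "S 0 = s0" unfolding T_def S_def t s Af_def Bf_def by simp_all
  have cD: "isCont (\<lambda>l. Af l * m0^2 - Bf l) 0" unfolding Af_def Bf_def by (intro continuous_intros)
  have eD: "eventually (\<lambda>l. Af l * m0^2 - Bf l \<noteq> 0) (at 0)"
    using ev_ne0[OF cD] D by (simp add: Af_def Bf_def)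
  have eA: "eventually (\<lambda>l. Af l \<noteq> 0) (at 0)"
  proof -
    have "eventually (\<lambda>l. 8*l^3 + (12*w0)*l^2 + (6*w0^2)*l + (w0^3-1) \<noteq> 0) (at 0)"
      by (rule ev_cubic) simp
    moreover have "Af l = 8*l^3 + (12*w0)*l^2 + (6*w0^2)*l + (w0^3-1)" for l
      unfolding Af_def by (simp add: algebra_simps power3_eq_cube power2_eq_square)
    ultimately show ?thesis by simp
  qed
  have eB: "eventually (\<lambda>l. Bf l \<noteq> 0) (at 0)"
  proof -
    have "eventually (\<lambda>l. 1*l^3 + (3*z0)*l^2 + (3*z0^2)*l + (z0^3-1) \<noteq> 0) (at 0)"
      by (rule ev_cubic) simp
    moreover have "Bf l = 1*l^3 + (3*z0)*l^2 + (3*z0^2)*l + (z0^3-1)" for l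
      unfolding Bf_def by (simp add: algebra_simps power3_eq_cube power2_eq_square)
    ultimately show ?thesis by simp
  qed
  have eAB: "eventually (\<lambda>l. Af l \<noteq> Bf l) (at 0)"
  proof -
    have "eventually (\<lambda>l. 7*l^3 + (12*w0 - 3*z0)*l^2 + (6*w0^2 - 3*z0^2)*l + (w0^3-z0^3) \<noteq> 0) (at 0)"
      by (rule ev_cubic) simp
    moreover have "Af l - Bf l = 7*l^3 + (12*w0 - 3*z0)*l^2 + (6*w0^2 - 3*z0^2)*l + (w0^3-z0^3)" for l
      unfolding Af_def Bf_def by (simp add: algebra_simps power3_eq_cube power2_eq_square)
    ultimately have "eventually (\<lambda>l. Af l - Bf l \<noteq> 0) (at 0)" by simp
    then show ?thesis by (rule eventually_mono) simp
  qed
  have ev: "eventually (\<lambda>l. p (mk (T l) (S l) (z0 + l) (w0 + 2*l)) = 0) (at 0)"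
    using eD eA eB eAB
  proof eventually_elim
    case (elim l)
    have "Af l * ((T l)^2 - 1) = Bf l * ((S l)^2 - 1)"
      unfolding T_def S_def by (rule ph_Q[OF a b]) (use elim in auto)
    then show ?case using elim by (intro S1) (simp_all add: Af_def Bf_def)
  qed
  show ?thesis using close4[OF pc cT[unfolded isCont_def] cS[unfolded isCont_def] cZ cW ev] T0 by simp
qed

lemma MOVE1:
  assumes z0: "z0^3 = 1" and w0: "w0^3 = 1" and al: "al \<noteq> 0" and be: "be \<noteq> 0" and ab: "al \<noteq> be"
    and a: "a^2 = 1" and b: "b^2 = 1" and D: "al*m0^2 \<noteq> be"
    and t: "t0 = PhT a b m0 al be" and s: "s0 = PhS a b m0 al be"
  shows "p (mk t0 s0 z0 w0) = 0"
proof -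
  define aa where "aa = (\<lambda>l::complex. al + al^2*l/3 + al^3*l^2/27)"
  define bb where "bb = (\<lambda>l::complex. be + be^2*l/3 + be^3*l^2/27)"
  have Aeq: "(w0*(1 + al*l/3))^3 - 1 = l * aa l" for l
  proof -
    have e1: "(w0*(1 + al*l/3))^3 = (1 + al*l/3)^3" using w0 by (simp add: power_mult_distrib)
    have e2: "(1 + al*l/3)^3 - 1 = l * aa l" unfolding aa_def by (simp add: field_simps power3_eq_cube power2_eq_square)
    show ?thesis using e1 e2 by simp
  qed
  have Beq: "(z0*(1 + be*l/3))^3 - 1 = l * bb l" for l
  proof -
    have e1: "(z0*(1 + be*l/3))^3 = (1 + be*l/3)^3" using z0 by (simp add: power_mult_distrib)
    have e2: "(1 + be*l/3)^3 - 1 = l * bb l" unfolding bb_def by (simp add: field_simps power3_eq_cube power2_eq_square)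
    show ?thesis using e1 e2 by simp
  qed
  define T where "T = (\<lambda>l. PhT a b m0 (aa l) (bb l))"
  define S where "S = (\<lambda>l. PhS a b m0 (aa l) (bb l))"
  have cT: "isCont T 0" unfolding T_def PhT_def rr_def aa_def bb_def
    by (intro continuous_intros) (use D in auto)
  have cS: "isCont S 0" unfolding S_def PhS_def rr_def aa_def bb_def
    by (intro continuous_intros) (use D in auto)
  have cZ: "((\<lambda>l. z0*(1 + be*l/3)) \<longlongrightarrow> z0) (at 0)" by (intro tendsto_eq_intros) auto
  have cW: "((\<lambda>l. w0*(1 + al*l/3)) \<longlongrightarrow> w0) (at 0)" by (intro tendsto_eq_intros) auto
  have T0: "T 0 = t0" "S 0 = s0" unfolding T_def S_def t s aa_def bb_def by simp_all
  have cD: "isCont (\<lambda>l. aa l * m0^2 - bb l) 0" unfolding aa_def bb_def by (intro continuous_intros) auto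
  have eD: "eventually (\<lambda>l. aa l * m0^2 - bb l \<noteq> 0) (at 0)"
    using ev_ne0[OF cD] D by (simp add: aa_def bb_def)
  have cA: "isCont aa 0" unfolding aa_def by (intro continuous_intros) auto
  have eA: "eventually (\<lambda>l. aa l \<noteq> 0) (at 0)" using ev_ne0[OF cA] al by (simp add: aa_def)
  have cB: "isCont bb 0" unfolding bb_def by (intro continuous_intros) auto
  have eB: "eventually (\<lambda>l. bb l \<noteq> 0) (at 0)" using ev_ne0[OF cB] be by (simp add: bb_def)
  have cAB: "isCont (\<lambda>l. aa l - bb l) 0" unfolding aa_def bb_def by (intro continuous_intros) auto
  have eAB: "eventually (\<lambda>l. aa l - bb l \<noteq> 0) (at 0)" using ev_ne0[OF cAB] ab by (simp add: aa_def bb_def)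
  have l0: "eventually (\<lambda>l::complex. l \<noteq> 0) (at 0)" by (rule eventually_neq_at_within)
  have ev: "eventually (\<lambda>l. p (mk (T l) (S l) (z0*(1 + be*l/3)) (w0*(1 + al*l/3))) = 0) (at 0)"
    using eD eA eB eAB l0
  proof eventually_elim
    case (elim l)
    have "aa l * ((T l)^2 - 1) = bb l * ((S l)^2 - 1)"
      unfolding T_def S_def by (rule ph_Q[OF a b]) (use elim in auto)
    then have Q: "l * aa l * ((T l)^2 - 1) = l * bb l * ((S l)^2 - 1)" by simp
    show ?case
    proof (rule S1)
      show "(w0*(1 + al*l/3))^3 - 1 \<noteq> 0" unfolding Aeq using elim by simp
      show "(z0*(1 + be*l/3))^3 - 1 \<noteq> 0" unfolding Beq using elim by simp
      show "(w0*(1 + al*l/3))^3 - 1 \<noteq> (z0*(1 + be*l/3))^3 - 1" unfolding Aeq Beq using elim by simp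
      show "((w0*(1 + al*l/3))^3 - 1) * ((T l)^2 - 1) = ((z0*(1 + be*l/3))^3 - 1) * ((S l)^2 - 1)"
        unfolding Aeq Beq using Q .
    qed
  qed
  show ?thesis using close4[OF pc cT[unfolded isCont_def] cS[unfolded isCont_def] cZ cW ev] T0 by simp
qed

lemma N3_generic_uv:
  assumes z0: "z0^3 = 1" and w0: "w0^3 = 1" and u0: "u \<noteq> 0" and u2: "u + 2 \<noteq> 0"
    and v0: "v \<noteq> 0" and v2: "v + 2 \<noteq> 0" and uv: "v - u \<noteq> 0" and uv2: "u + v + 2 \<noteq> 0"
  shows "p (mk (v+1) (u+1) z0 w0) = 0"
proof -
  define al where "al = u * (u + 2)"
  define be where "be = v * (v + 2)"
  define m0 where "m0 = v/u"
  have am: "al*m0 = (u+2)* v" unfolding al_def m0_def using u0 by (simp add: field_simps)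
  have Deq: "al*m0^2 - be = 2* v *(v-u)/u"
    unfolding al_def be_def m0_def using u0 by (simp add: field_simps power2_eq_square)
  have D: "al*m0^2 \<noteq> be" using Deq u0 v0 uv by auto
  have "u*(al*m0^2 - be) = 2 * v * (v-u)" using Deq u0 by simp
  also have "\<dots> = 2*(be - al*m0)" unfolding am be_def by (simp add: algebra_simps)
  finally have eq: "u*(al*m0^2 - be) = 2*(1*be - 1*al*m0)" by simp
  have r: "rr 1 1 m0 al be = u" using rr_iff[OF D, of 1 1 u] eq by simp
  show ?thesis
  proof (rule MOVE1[OF z0 w0 _ _ _ _ _ D])
    show "al \<noteq> 0" "be \<noteq> 0" using u0 u2 v0 v2 by (auto simp: al_def be_def)
    have "al - be = (u - v)*(u + v + 2)" unfolding al_def be_def by (simp add: algebra_simps)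
    then show "al \<noteq> be" using uv uv2 by auto
    show "v + 1 = PhT 1 1 m0 al be" unfolding PhT_def r using u0 by (simp add: m0_def)
    show "u + 1 = PhS 1 1 m0 al be" unfolding PhS_def r by simp
  qed simp_all
qed

lemma N3_generic:
  assumes z0: "z0^3 = 1" and w0: "w0^3 = 1" and t1: "t0^2 \<noteq> 1" and s1: "s0^2 \<noteq> 1" and ts: "t0^2 \<noteq> s0^2"
  shows "p (mk t0 s0 z0 w0) = 0"
proof -
  have "p (mk ((t0-1)+1) ((s0-1)+1) z0 w0) = 0"
  proof (rule N3_generic_uv[OF z0 w0])
    show "s0 - 1 \<noteq> 0" "s0 - 1 + 2 \<noteq> 0" using s1 by (auto simp: power2_eq_1_iff add_eq_0_iff)
    show "t0 - 1 \<noteq> 0" "t0 - 1 + 2 \<noteq> 0" using t1 by (auto simp: power2_eq_1_iff add_eq_0_iff)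
    show "t0 - 1 - (s0 - 1) \<noteq> 0" using ts by auto
    show "s0 - 1 + (t0 - 1) + 2 \<noteq> 0"
    proof
      assume "s0 - 1 + (t0 - 1) + 2 = 0"
      then have "t0 = - s0" by (simp add: algebra_simps eq_neg_iff_add_eq_0)
      then show False using ts by simp
    qed
  qed
  then show ?thesis by simp
qed

lemma N3:
  assumes z0: "z0^3 = 1" and w0: "w0^3 = 1"
  shows "p (mk t0 s0 z0 w0) = 0"
proof -
  have e1: "eventually (\<lambda>l. 1*l^2 + (2*t0)*l + (t0^2-1) \<noteq> 0) (at 0)" by (rule ev_quad) simp
  have e2: "eventually (\<lambda>l. 4*l^2 + (4* s0)*l + (s0^2-1) \<noteq> 0) (at 0)" by (rule ev_quad) simp
  have e3: "eventually (\<lambda>l. (-3)*l^2 + (2*t0 - 4* s0)*l + (t0^2-s0^2) \<noteq> 0) (at 0)" by (rule ev_quad) simp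
  have ev: "eventually (\<lambda>l. p (mk (t0 + l) (s0 + 2*l) z0 w0) = 0) (at 0)"
    using e1 e2 e3
  proof eventually_elim
    case (elim l)
    have i1: "(t0+l)^2 - 1 = 1*l^2 + (2*t0)*l + (t0^2-1)" by (simp add: power2_eq_square algebra_simps)
    have i2: "(s0+2*l)^2 - 1 = 4*l^2 + (4* s0)*l + (s0^2-1)" by (simp add: power2_eq_square algebra_simps)
    have i3: "(t0+l)^2 - (s0+2*l)^2 = (-3)*l^2 + (2*t0 - 4* s0)*l + (t0^2-s0^2)"
      by (simp add: power2_eq_square algebra_simps)
    show ?case
    proof (rule N3_generic[OF z0 w0])
      have "(t0+l)^2 - 1 \<noteq> 0" using elim(1) by (simp only: i1 not_False_eq_True)
      then show "(t0+l)^2 \<noteq> 1" by simp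
      have "(s0+2*l)^2 - 1 \<noteq> 0" using elim(2) by (simp only: i2 not_False_eq_True)
      then show "(s0+2*l)^2 \<noteq> 1" by simp
      have "(t0+l)^2 - (s0+2*l)^2 \<noteq> 0" using elim(3) by (simp only: i3 not_False_eq_True)
      then show "(t0+l)^2 \<noteq> (s0+2*l)^2" by simp
    qed
  qed
  have c1: "((\<lambda>l. t0 + l) \<longlongrightarrow> t0) (at 0)" by (intro tendsto_eq_intros) auto
  have c2: "((\<lambda>l. s0 + 2*l) \<longlongrightarrow> s0) (at 0)" by (intro tendsto_eq_intros) auto
  show ?thesis by (rule close4[OF pc c1 c2 tendsto_const tendsto_const ev])
qed

lemma N1:
  assumes Q: "(w0^3-1)*(t0^2-1) = (z0^3-1)*(s0^2-1)" and A: "w0^3 - 1 = 0" and B: "z0^3 - 1 \<noteq> 0"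
  shows "p (mk t0 s0 z0 w0) = 0"
proof -
  have s2: "s0^2 = 1" using Q A B by simp
  define b where "b = -s0"
  define m0 where "m0 = (1-t0)*b/2"
  have b2: "b^2 = 1" using s2 by (simp add: b_def)
  have D: "(w0^3-1)*m0^2 \<noteq> z0^3-1" using A B by simp
  have r: "rr 1 b m0 (w0^3-1) (z0^3-1) = -2*b"
    unfolding rr_iff[OF D] using A by (simp add: algebra_simps)
  show ?thesis
  proof (rule MOVE0[OF _ b2 D])
    have "PhT 1 b m0 (w0^3-1) (z0^3-1) = 1 + m0*(-2*b)" unfolding PhT_def r by simp
    also have "\<dots> = 1 - (1-t0)*(b*b)" unfolding m0_def by (simp add: field_simps)
    also have "\<dots> = t0" using b2 by (simp add: power2_eq_square)
    finally show "t0 = PhT 1 b m0 (w0^3-1) (z0^3-1)" by simp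
    show "s0 = PhS 1 b m0 (w0^3-1) (z0^3-1)" unfolding PhS_def r unfolding b_def by simp
  qed simp
qed

lemma N2:
  assumes Q: "(w0^3-1)*(t0^2-1) = (z0^3-1)*(s0^2-1)" and A: "w0^3 - 1 \<noteq> 0" and B: "z0^3 - 1 = 0"
  shows "p (mk t0 s0 z0 w0) = 0"
proof -
  have t2: "t0^2 = 1" using Q A B by simp
  define a where "a = -t0"
  define b :: complex where "b = (if s0 = 1 then -1 else 1)"
  define m0 where "m0 = 2*a/(b - s0)"
  have a2: "a^2 = 1" using t2 by (simp add: a_def)
  have b2: "b^2 = 1" by (simp add: b_def)
  have bs: "b - s0 \<noteq> 0" by (auto simp: b_def)
  have a0: "a \<noteq> 0" using a2 by auto
  have m0: "m0 \<noteq> 0" using a0 bs by (simp add: m0_def)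
  have D: "(w0^3-1)*m0^2 \<noteq> z0^3-1" using A B m0 by simp
  define d where "d = b - s0"
  define AA where "AA = w0^3 - 1"
  have d: "d \<noteq> 0" using bs by (simp add: d_def)
  have AA: "AA \<noteq> 0" using A by (simp add: AA_def)
  have m0d: "m0 = 2*a/d" by (simp add: m0_def d_def)
  have s0b: "s0 - b = -d" by (simp add: d_def)
  have eq: "(s0 - b) * ((w0^3-1)*m0^2 - (z0^3-1)) = 2*(b*(z0^3-1) - a*(w0^3-1)*m0)"
    unfolding B m0d s0b AA_def[symmetric] using d AA by (simp add: field_simps power2_eq_square)
  have r: "rr a b m0 (w0^3-1) (z0^3-1) = s0 - b" using rr_iff[OF D, of a b "s0 - b"] eq by simp
  show ?thesis
  proof (rule MOVE0[OF a2 b2 D])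
    show "t0 = PhT a b m0 (w0^3-1) (z0^3-1)" unfolding PhT_def r unfolding m0d s0b a_def
      using d by (simp add: field_simps)
    show "s0 = PhS a b m0 (w0^3-1) (z0^3-1)" unfolding PhS_def r by simp
  qed
qed

lemma N4a:
  assumes AB: "w0^3 - 1 = z0^3 - 1" and A: "w0^3 - 1 \<noteq> 0" and ts: "t0 = s0" and s0: "s0 \<noteq> 0"
  shows "p (mk t0 s0 z0 w0) = 0"
proof -
  define C where "C = w0^3 - 1"
  define b :: complex where "b = (if s0 = 1 then -1 else 1)"
  define m0 where "m0 = (s0+b)/(s0-b)"
  have b2: "b^2 = 1" and a2: "(-b)^2 = 1" by (simp_all add: b_def)
  have bs: "s0 - b \<noteq> 0" by (auto simp: b_def)
  have b0: "b \<noteq> 0" by (simp add: b_def)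
  have m1: "m0 - 1 = 2*b/(s0-b)" unfolding m0_def using bs by (simp add: field_simps)
  have m2: "m0 + 1 = 2* s0/(s0-b)" unfolding m0_def using bs by (simp add: field_simps)
  have Dd: "C*m0^2 - C = C*(m0-1)*(m0+1)" by (simp add: algebra_simps power2_eq_square)
  have D': "C*m0^2 - C \<noteq> 0" unfolding Dd m1 m2 using A b0 bs s0 by (simp add: C_def)
  have D: "(w0^3-1)*m0^2 \<noteq> z0^3-1" using D' AB by (simp add: C_def)
  have Bz: "z0^3 - 1 = C" using AB C_def by simp
  have eq: "(s0 - b) * (C * m0\<^sup>2 - C) = 2 * (b * C - (- b) * C * m0)"
  proof -
    have "(s0 - b) * (C * m0\<^sup>2 - C) = (s0-b)*C*(m0-1)*(m0+1)" unfolding Dd by simp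
    also have "\<dots> = C*2*b*(m0+1)" unfolding m1 using bs by simp
    also have "\<dots> = 2 * (b * C - - b * C * m0)" by (simp add: algebra_simps)
    finally show ?thesis by simp
  qed
  have r: "rr (-b) b m0 (w0^3-1) (z0^3-1) = s0 - b"
    using rr_iff[OF D, of "-b" b "s0 - b"] eq Bz C_def by simp
  show ?thesis
  proof (rule MOVE0[OF a2 b2 D])
    show "t0 = PhT (-b) b m0 (w0^3-1) (z0^3-1)" unfolding PhT_def r unfolding m0_def ts
      using bs by (simp add: field_simps)
    show "s0 = PhS (-b) b m0 (w0^3-1) (z0^3-1)" unfolding PhS_def r by simp
  qed
qed

lemma N4b:
  assumes AB: "w0^3 - 1 = z0^3 - 1" and A: "w0^3 - 1 \<noteq> 0" and ts: "t0 = -s0" and s0: "s0 \<noteq> 0"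
  shows "p (mk t0 s0 z0 w0) = 0"
proof -
  define C where "C = w0^3 - 1"
  define b :: complex where "b = (if s0 = 1 then -1 else 1)"
  define m0 where "m0 = (b+s0)/(b-s0)"
  have b2: "b^2 = 1" by (simp_all add: b_def)
  have bs: "b - s0 \<noteq> 0" by (auto simp: b_def)
  have b0: "b \<noteq> 0" by (simp add: b_def)
  have m1: "m0 - 1 = 2* s0/(b-s0)" unfolding m0_def using bs by (simp add: field_simps)
  have m2: "m0 + 1 = 2*b/(b-s0)" unfolding m0_def using bs by (simp add: field_simps)
  have Dd: "C*m0^2 - C = C*(m0-1)*(m0+1)" by (simp add: algebra_simps power2_eq_square)
  have D': "C*m0^2 - C \<noteq> 0" unfolding Dd m1 m2 using A b0 bs s0 by (simp add: C_def)
  have D: "(w0^3-1)*m0^2 \<noteq> z0^3-1" using D' AB by (simp add: C_def)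
  have Bz: "z0^3 - 1 = C" using AB C_def by simp
  have eq: "(s0 - b) * (C * m0\<^sup>2 - C) = 2 * (b * C - b * C * m0)"
  proof -
    have "(s0 - b) * (C * m0\<^sup>2 - C) = (s0-b)*C*(m0-1)*(m0+1)" unfolding Dd by simp
    also have "\<dots> = -(C*2*b*(m0-1))" unfolding m2 using bs by (simp add: field_simps)
    also have "\<dots> = 2 * (b * C - b * C * m0)" by (simp add: algebra_simps)
    finally show ?thesis .
  qed
  have r: "rr b b m0 (w0^3-1) (z0^3-1) = s0 - b"
    using rr_iff[OF D, of b b "s0 - b"] eq Bz C_def by simp
  show ?thesis
  proof (rule MOVE0[OF b2 b2 D])
    show "t0 = PhT b b m0 (w0^3-1) (z0^3-1)" unfolding PhT_def r unfolding m0_def ts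
      using bs by (simp add: field_simps)
    show "s0 = PhS b b m0 (w0^3-1) (z0^3-1)" unfolding PhS_def r by simp
  qed
qed

lemma N4c:
  assumes AB: "w0^3 - 1 = z0^3 - 1" and A: "w0^3 - 1 \<noteq> 0"
  shows "p (mk 0 0 z0 w0) = 0"
proof -
  have l0: "eventually (\<lambda>l::complex. l \<noteq> 0) (at 0)" by (rule eventually_neq_at_within)
  have ev: "eventually (\<lambda>l. p (mk l l z0 w0) = 0) (at 0)"
    using l0 by eventually_elim (rule N4a[OF AB A], auto)
  have c: "((\<lambda>l. l) \<longlongrightarrow> 0) (at (0::complex))" by (rule tendsto_ident_at)
  show ?thesis by (rule close4[OF pc c c tendsto_const tendsto_const ev])
qed

lemma dense_all:
  assumes Q: "(w^3-1)*(t^2-1) = (z^3-1)*(s^2-1)"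
  shows "p (mk t s z w) = 0"
proof (cases "w^3 - 1 = 0")
  case A: True
  show ?thesis
  proof (cases "z^3 - 1 = 0")
    case True
    then show ?thesis using A N3 by simp
  next
    case False
    then show ?thesis using A N1 Q by simp
  qed
next
  case A: False
  show ?thesis
  proof (cases "z^3 - 1 = 0")
    case True
    then show ?thesis using A N2 Q by simp
  next
    case B: False
    show ?thesis
    proof (cases "w^3 - 1 = z^3 - 1")
      case False
      then show ?thesis using S1 Q A B by simp
    next
      case AB: True
      then have "t^2 = s^2" using Q A by simp
      then have "(t - s)*(t + s) = 0" by (simp add: algebra_simps power2_eq_square)
      then have "t - s = 0 \<or> t + s = 0" by simp
      then have ts: "t = s \<or> t = -s"
      proof
        assume "t + s = 0"
        then have "t = -s" by (simp add: eq_neg_iff_add_eq_0)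
        then show ?thesis by simp
      qed simp
      show ?thesis
      proof (cases "s = 0")
        case True
        then have "t = 0" using ts by auto
        then show ?thesis using True N4c[OF AB A] by simp
      next
        case False
        then show ?thesis using ts N4a[OF AB A] N4b[OF AB A] by auto
      qed
    qed
  qed
qed

end

lemma pf_diff: "polyfun C f \<Longrightarrow> polyfun C g \<Longrightarrow> polyfun C (\<lambda>x. f x - g x)"
proof -
  assume f: "polyfun C f" and g: "polyfun C g"
  have "polyfun C (\<lambda>x. f x + (\<lambda>x. -1) x * g x)"
    by (intro pf_add pf_mult f g pf_const)
  then show ?thesis by simp
qed

lemma affpoly_const: "affpoly (\<lambda>x. c)" unfolding affpoly_def by (rule pf_const)
lemma affpoly_var: "affpoly (\<lambda>x. x $ i)" unfolding affpoly_def by (rule pf_var) auto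
lemma affpoly_add: "affpoly f \<Longrightarrow> affpoly g \<Longrightarrow> affpoly (\<lambda>x. f x + g x)"
  unfolding affpoly_def by (rule pf_add)
lemma affpoly_mult: "affpoly f \<Longrightarrow> affpoly g \<Longrightarrow> affpoly (\<lambda>x. f x * g x)"
  unfolding affpoly_def by (rule pf_mult)
lemma affpoly_diff: "affpoly f \<Longrightarrow> affpoly g \<Longrightarrow> affpoly (\<lambda>x. f x - g x)"
  unfolding affpoly_def by (rule pf_diff)
lemma affpoly_uminus: "affpoly f \<Longrightarrow> affpoly (\<lambda>x. - f x)"
  using affpoly_diff[OF affpoly_const[of 0], of f] by simp
lemma affpoly_pow: "affpoly f \<Longrightarrow> affpoly (\<lambda>x. f x ^ n)"
proof (induction n)
  case 0 then show ?case using affpoly_const[of 1] by simp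
next
  case (Suc n) then show ?case using affpoly_mult[OF Suc.prems Suc.IH[OF Suc.prems]] by simp
qed
lemma affpoly_if: "affpoly f \<Longrightarrow> affpoly g \<Longrightarrow> affpoly (\<lambda>x. if P then f x else g x)"
  by (cases P) simp_all

lemmas affpoly_intros = affpoly_const affpoly_var affpoly_add affpoly_mult affpoly_diff
  affpoly_uminus affpoly_pow affpoly_if

definition aF :: "4 \<Rightarrow> complex^3 \<Rightarrow> complex" where
  "aF i u = (if i = 1 then - ((u$3)^3 - 1) * (u$1)^2 + 2 * (u$1) * ((u$2)^3 - 1) - ((u$2)^3 - 1)
     else if i = 2 then ((u$3)^3 - 1) * (u$1)^2 - 2 * ((u$3)^3 - 1) * (u$1) + ((u$2)^3 - 1)
     else if i = 3 then u$2 else u$3)"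
definition bF :: "4 \<Rightarrow> complex^3 \<Rightarrow> complex" where
  "bF i u = (if i = 1 then ((u$3)^3 - 1) * (u$1)^2 - ((u$2)^3 - 1)
     else if i = 2 then ((u$3)^3 - 1) * (u$1)^2 - ((u$2)^3 - 1) else 1)"
definition cF :: "3 \<Rightarrow> complex^4 \<Rightarrow> complex" where
  "cF j x = (if j = 1 then x$1 - 1 else if j = 2 then x$3 else x$4)"
definition eF :: "3 \<Rightarrow> complex^4 \<Rightarrow> complex" where
  "eF j x = (if j = 1 then x$2 - 1 else 1)"
definition gF :: "complex^3 \<Rightarrow> complex" where
  "gF u = (((u$3)^3 - 1) * (u$1)^2 - ((u$2)^3 - 1)) * (((u$2)^3 - 1) - ((u$3)^3 - 1) * (u$1))"
definition hF :: "complex^4 \<Rightarrow> complex" where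
  "hF x = (x$2 - 1) * (((x$4)^3 - 1) * (x$1 - 1)^2 - ((x$3)^3 - 1) * (x$2 - 1)^2)"

lemma fwd:
  assumes D: "A*m^2 - B \<noteq> 0"
  shows "(- A * m^2 + 2 * m * B - B)/(A*m^2 - B) = PhT 1 1 m A B"
    and "(A * m^2 - 2 * A * m + B)/(A*m^2 - B) = PhS 1 1 m A B"
  using D by (simp_all add: PhT_def PhS_def rr_def field_simps power2_eq_square)

lemma fwd_r:
  assumes D: "A*m^2 - B \<noteq> 0" and N: "B - A*m \<noteq> 0"
  shows "PhS 1 1 m A B - 1 \<noteq> 0" and "(PhT 1 1 m A B - 1)/(PhS 1 1 m A B - 1) = m"
proof -
  have r: "rr 1 1 m A B \<noteq> 0" using D N by (simp add: rr_def)
  show "PhS 1 1 m A B - 1 \<noteq> 0" using r by (simp add: PhS_def)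
  show "(PhT 1 1 m A B - 1)/(PhS 1 1 m A B - 1) = m" using r by (simp add: PhS_def PhT_def)
qed

lemma inv_ST:
  fixes A B S T :: complex
  assumes Q: "A*T*(T+2) = B*S*(S+2)" and S: "S \<noteq> 0" and N: "A*T^2 \<noteq> B*S^2"
  shows "A*(T/S)^2 - B \<noteq> 0"
    and "(- A * (T/S)^2 + 2 * (T/S) * B - B)/(A*(T/S)^2 - B) = T + 1"
    and "(A * (T/S)^2 - 2 * A * (T/S) + B)/(A*(T/S)^2 - B) = S + 1"
proof -
  have d: "A*(T/S)^2 - B = (A*T^2 - B*S^2)/S^2" using S by (simp add: field_simps)
  have d0: "A*T^2 - B*S^2 \<noteq> 0" using N by simp
  show "A*(T/S)^2 - B \<noteq> 0" unfolding d using d0 S by simp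
  have n1: "- A * (T/S)^2 + 2 * (T/S) * B - B = (- A*T^2 + 2*T*S*B - B*S^2)/S^2"
    using S by (simp add: field_simps power2_eq_square)
  have n2: "A * (T/S)^2 - 2 * A * (T/S) + B = (A*T^2 - 2*A*T*S + B*S^2)/S^2"
    using S by (simp add: field_simps power2_eq_square)
  have i1: "- A*T^2 + 2*T*S*B - B*S^2 = (T+1)*(A*T^2 - B*S^2)"
  proof -
    have "(T+1)*(A*T^2 - B*S^2) - (- A*T^2 + 2*T*S*B - B*S^2) = T*(A*T*(T+2) - B*S*(S+2))"
      by (simp add: algebra_simps power2_eq_square)
    then show ?thesis using Q by simp
  qed
  have i2: "A*T^2 - 2*A*T*S + B*S^2 = (S+1)*(A*T^2 - B*S^2)"
  proof -
    have "(S+1)*(A*T^2 - B*S^2) - (A*T^2 - 2*A*T*S + B*S^2) = - S*(B*S*(S+2) - A*T*(T+2))"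
      by (simp add: algebra_simps power2_eq_square)
    then show ?thesis using Q by simp
  qed
  show "(- A * (T/S)^2 + 2 * (T/S) * B - B)/(A*(T/S)^2 - B) = T + 1"
    unfolding n1 d i1 using S d0 by simp
  show "(A * (T/S)^2 - 2 * A * (T/S) + B)/(A*(T/S)^2 - B) = S + 1"
    unfolding n2 d i2 using S d0 by simp
qed

theorem proposition2p6:
  "birational_to_affine
     {x :: complex^4. ((x$4)^3 - 1) * ((x$1)^2 - 1) = ((x$3)^3 - 1) * ((x$2)^2 - 1)}
     TYPE(3)"
proof -
  let ?X = "{x :: complex^4. ((x$4)^3 - 1) * ((x$1)^2 - 1) = ((x$3)^3 - 1) * ((x$2)^2 - 1)}"
  have P1: "\<forall>i. affpoly (aF i) \<and> affpoly (bF i)"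
    unfolding aF_def bF_def by (intro allI conjI affpoly_intros)
  have P2: "\<forall>j. affpoly (cF j) \<and> affpoly (eF j)"
    unfolding cF_def eF_def by (intro allI conjI affpoly_intros)
  have P3: "affpoly gF" unfolding gF_def by (intro affpoly_intros)
  have P4: "affpoly hF" unfolding hF_def by (intro affpoly_intros)
  have P5: "\<exists>u. gF u \<noteq> 0" by (rule exI[of _ 0]) (simp add: gF_def)
  have P6: "zariski_dense_in {x\<in>?X. hF x \<noteq> 0} ?X"
    unfolding zariski_dense_in_def
  proof (intro conjI allI impI ballI)
    show "{x\<in>?X. hF x \<noteq> 0} \<subseteq> ?X" by auto
    fix p :: "complex^4 \<Rightarrow> complex" and x
    assume p: "affpoly p" and v: "\<forall>v\<in>{x\<in>?X. hF x \<noteq> 0}. p v = 0" and x: "x \<in> ?X"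
    have "p (mk (x$1) (x$2) (x$3) (x$4)) = 0"
    proof (rule dense_all[OF affpoly_cont[OF p]])
      fix t s z w :: complex
      assume Q: "(w^3-1)*(t^2-1) = (z^3-1)*(s^2-1)" and s: "s \<noteq> 1"
        and N: "(w^3-1)*(t-1)^2 \<noteq> (z^3-1)*(s-1)^2"
      have "mk t s z w \<in> {x\<in>?X. hF x \<noteq> 0}" using Q s N by (simp add: hF_def)
      then show "p (mk t s z w) = 0" using v by blast
    next
      show "(x$4^3-1)*(x$1^2-1) = (x$3^3-1)*(x$2^2-1)" using x by simp
    qed
    then show "p x = 0" by (simp add: mk_eta)
  qed
  have P7: "\<forall>u. gF u \<noteq> 0 \<longrightarrow>
            (\<forall>i. bF i u \<noteq> 0) \<and> (\<chi> i. aF i u / bF i u) \<in> ?X \<and>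
            (\<forall>j. eF j (\<chi> i. aF i u / bF i u) \<noteq> 0) \<and>
            (\<chi> j. cF j (\<chi> i. aF i u / bF i u) / eF j (\<chi> i. aF i u / bF i u)) = u"
  proof (intro allI impI)
    fix u :: "complex^3"
    assume g: "gF u \<noteq> 0"
    define m where "m = u$1"
    define z where "z = u$2"
    define w where "w = u$3"
    define A where "A = w^3 - 1"
    define B where "B = z^3 - 1"
    have D: "A*m^2 - B \<noteq> 0" and N: "B - A*m \<noteq> 0" using g by (auto simp: gF_def A_def B_def m_def z_def w_def)
    define ph where "ph = (\<chi> i. aF i u / bF i u)"
    have c1: "ph $ 1 = PhT 1 1 m A B"
      using fwd(1)[OF D] by (simp add: ph_def aF_def bF_def A_def B_def m_def z_def w_def)
    have c2: "ph $ 2 = PhS 1 1 m A B"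
      using fwd(2)[OF D] by (simp add: ph_def aF_def bF_def A_def B_def m_def z_def w_def)
    have c3: "ph $ 3 = z" by (simp add: ph_def aF_def bF_def z_def)
    have c4: "ph $ 4 = w" by (simp add: ph_def aF_def bF_def w_def)
    have bs: "\<forall>i. bF i u \<noteq> 0"
    proof
      fix i :: 4
      show "bF i u \<noteq> 0" using D by (simp add: bF_def A_def B_def m_def z_def w_def)
    qed
    have PQ: "A*((PhT 1 1 m A B)^2 - 1) = B*((PhS 1 1 m A B)^2-1)" by (rule ph_Q) (use D in auto)
    have inX: "ph \<in> ?X"
      unfolding mem_Collect_eq c1 c2 c3 c4 using PQ by (simp add: A_def B_def)
    have es: "\<forall>j. eF j ph \<noteq> 0"
    proof
      fix j :: 3
      show "eF j ph \<noteq> 0" unfolding eF_def c2 using fwd_r(1)[OF D N] by simp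
    qed
    have inv: "(\<chi> j. cF j ph / eF j ph) = u"
      unfolding vec_eq_iff forall_3
      using fwd_r(2)[OF D N] by (simp add: cF_def eF_def c1 c2 c3 c4 m_def z_def w_def)
    show "(\<forall>i. bF i u \<noteq> 0) \<and> (\<chi> i. aF i u / bF i u) \<in> ?X \<and>
            (\<forall>j. eF j (\<chi> i. aF i u / bF i u) \<noteq> 0) \<and>
            (\<chi> j. cF j (\<chi> i. aF i u / bF i u) / eF j (\<chi> i. aF i u / bF i u)) = u"
      using bs inX es inv unfolding ph_def by blast
  qed
  have P8: "\<forall>x\<in>?X. hF x \<noteq> 0 \<longrightarrow>
            (\<forall>j. eF j x \<noteq> 0) \<and> (\<forall>i. bF i (\<chi> j. cF j x / eF j x) \<noteq> 0) \<and>
            (\<chi> i. aF i (\<chi> j. cF j x / eF j x) / bF i (\<chi> j. cF j x / eF j x)) = x"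
  proof (intro ballI impI)
    fix x :: "complex^4"
    assume x: "x \<in> ?X" and h: "hF x \<noteq> 0"
    define T where "T = x$1 - 1"
    define S where "S = x$2 - 1"
    define A where "A = x$4^3 - 1"
    define B where "B = x$3^3 - 1"
    have S0: "S \<noteq> 0" using h by (simp add: hF_def S_def)
    have N: "A*T^2 \<noteq> B*S^2" using h by (simp add: hF_def S_def T_def A_def B_def)
    have Q: "A*T*(T+2) = B*S*(S+2)"
    proof -
      have "A*((T+1)^2 - 1) = B*((S+1)^2 - 1)" using x by (simp add: A_def B_def T_def S_def)
      then show ?thesis by (simp add: algebra_simps power2_eq_square)
    qed
    define ps where "ps = (\<chi> j. cF j x / eF j x)"
    note iv = inv_ST[OF Q S0 N]
    have p1: "ps $ 1 = T/S" by (simp add: ps_def cF_def eF_def T_def S_def)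
    have p2: "ps $ 2 = x$3" by (simp add: ps_def cF_def eF_def)
    have p3: "ps $ 3 = x$4" by (simp add: ps_def cF_def eF_def)
    have es: "\<forall>j. eF j x \<noteq> 0"
    proof
      fix j :: 3
      show "eF j x \<noteq> 0" using S0 by (simp add: eF_def S_def)
    qed
    have bs: "\<forall>i. bF i ps \<noteq> 0"
    proof
      fix i :: 4
      show "bF i ps \<noteq> 0"
        using iv(1) by (simp add: bF_def p1 p2 p3 A_def B_def)
    qed
    have eqx: "(\<chi> i. aF i ps / bF i ps) = x"
      unfolding vec_eq_iff forall_4
      using iv(2,3) by (simp add: aF_def bF_def p1 p2 p3 A_def B_def T_def S_def)
    show "(\<forall>j. eF j x \<noteq> 0) \<and> (\<forall>i. bF i (\<chi> j. cF j x / eF j x) \<noteq> 0) \<and>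
            (\<chi> i. aF i (\<chi> j. cF j x / eF j x) / bF i (\<chi> j. cF j x / eF j x)) = x"
      using es bs eqx unfolding ps_def by blast
  qed
  show ?thesis unfolding birational_to_affine_def
    apply (rule exI[of _ aF], rule exI[of _ bF], rule exI[of _ cF], rule exI[of _ eF])
    apply (rule exI[of _ gF], rule exI[of _ hF])
    using P1 P2 P3 P4 P5 P6 P7 P8 by blast
qed

end
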